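(* Let $m\ge1$ be an integer and let $\alpha(m,3)$ denote the independence number of ${\rm SR}(m,3)$. Then $\alpha(m,3)=\frac16(m+1)(m+2)$ if $m\equiv\pm1\pmod 6$; $\alpha(m,3)=\frac16 m(m+3)$ if $m\equiv 3\pmod 6$; $\alpha(m,3)=\frac16 m(m+2)$ if $m\equiv 0,4\pmod 6$; $\alpha(m,3)=\frac16(m^2+2m-2)$ if $m\equiv 2\pmod 6$.
   Context: ${\rm SR}(m,n)$ is the graph whose vertices are the vectors in $\{0,1,2,\dots\}^m$ with coordinate sum $n$, two vertices being adjacent when they differ in precisely two coordinate positions. The independence number is the largest size of a set of pairwise nonadjacent vertices. *)

theory Defs
  imports Main
begin

definition SR_vertices :: "nat \<Rightarrow> nat \<Rightarrow> (nat \<Rightarrow> nat) set" where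
  "SR_vertices m n = {x. (\<forall>i\<ge>m. x i = 0) \<and> (\<Sum>i<m. x i) = n}"

definition SR_adj :: "nat \<Rightarrow> (nat \<Rightarrow> nat) \<Rightarrow> (nat \<Rightarrow> nat) \<Rightarrow> bool" where
  "SR_adj m x y \<longleftrightarrow> card {i. i < m \<and> x i \<noteq> y i} = 2"

definition SR_independent :: "nat \<Rightarrow> nat \<Rightarrow> (nat \<Rightarrow> nat) set \<Rightarrow> bool" where
  "SR_independent m n S \<longleftrightarrow> S \<subseteq> SR_vertices m n \<and>
     (\<forall>x\<in>S. \<forall>y\<in>S. \<not> SR_adj m x y)"

definition SR_alpha :: "nat \<Rightarrow> nat \<Rightarrow> nat" where
  "SR_alpha m n = Max (card ` {S. SR_independent m n S})"

end

theory Submission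
  imports Defs
begin


abbreviation V where "V \<equiv> SR_vertices"

lemma V_zero: "x \<in> V m n \<Longrightarrow> m \<le> i \<Longrightarrow> x i = 0"
  by (auto simp: SR_vertices_def)

lemma V_sum: "x \<in> V m n \<Longrightarrow> (\<Sum>i<m. x i) = n"
  by (auto simp: SR_vertices_def)

lemma V_le: assumes "x \<in> V m n" shows "x i \<le> n"
proof (cases "i < m")
  case True
  have "x i \<le> (\<Sum>i<m. x i)" by (rule member_le_sum) (use True in auto)
  then show ?thesis using V_sum[OF assms] by simp
next
  case False then show ?thesis using V_zero[OF assms] by simp
qed

lemma V_conc: assumes "x \<in> V m n" "x b = n" "i \<noteq> b" shows "x i = 0"
proof (cases "i < m \<and> b < m")
  case True
  have "(\<Sum>j\<in>{b,i}. x j) \<le> (\<Sum>j<m. x j)"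
    by (rule sum_mono2) (use True in auto)
  then show ?thesis using V_sum[OF assms(1)] assms(2,3) by simp
next
  case False
  moreover have "b \<ge> m \<Longrightarrow> x i = 0" using V_le[OF assms(1), of i] V_zero[OF assms(1), of b] assms(2) by simp
  ultimately show ?thesis using V_zero[OF assms(1), of i] by linarith
qed

lemma V_upd: assumes "x \<in> V m n" "a < m" "k \<le> x a"
  shows "x(a := x a - k) \<in> V m (n - k)"
proof -
  have s: "(\<Sum>i<m. x i) = x a + (\<Sum>i\<in>{..<m}-{a}. x i)"
    by (rule sum.remove) (use assms in auto)
  have s2: "(\<Sum>i<m. (x(a := x a - k)) i) = (x(a := x a - k)) a + (\<Sum>i\<in>{..<m}-{a}. (x(a := x a - k)) i)"
    by (rule sum.remove) (use assms in auto)
  have "(\<Sum>i\<in>{..<m}-{a}. (x(a := x a - k)) i) = (\<Sum>i\<in>{..<m}-{a}. x i)"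
    by (rule sum.cong) auto
  then show ?thesis using s s2 assms V_sum[OF assms(1)] V_zero[OF assms(1)]
    by (auto simp: SR_vertices_def)
qed

lemma adj_upd: assumes "k \<le> x a" "k \<le> y a"
  shows "SR_adj m (x(a := x a - k)) (y(a := y a - k)) = SR_adj m x y"
proof -
  have "{i. i < m \<and> (x(a := x a - k)) i \<noteq> (y(a := y a - k)) i} = {i. i < m \<and> x i \<noteq> y i}"
    using assms by auto
  then show ?thesis by (simp add: SR_adj_def)
qed

lemma adj_conc: assumes "x \<in> V m n" "y \<in> V m n" "x b = n" "y c = n" "b \<noteq> c" "n > 0"
  shows "SR_adj m x y"
proof -
  have bm: "b < m" using V_zero[OF assms(1), of b] assms by (cases "b < m") auto
  have cm: "c < m" using V_zero[OF assms(2), of c] assms by (cases "c < m") auto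
  have "{i. i < m \<and> x i \<noteq> y i} = {b, c}"
  proof (intro set_eqI iffI)
    fix i assume "i \<in> {i. i < m \<and> x i \<noteq> y i}"
    then show "i \<in> {b,c}" using V_conc[OF assms(1,3)] V_conc[OF assms(2,4)] by force
  next
    fix i assume "i \<in> {b,c}"
    then show "i \<in> {i. i < m \<and> x i \<noteq> y i}"
      using V_conc[OF assms(1,3), of c] V_conc[OF assms(2,4), of b] assms bm cm by auto
  qed
  then show ?thesis using assms(5) by (simp add: SR_adj_def)
qed

lemma V_nonzero: assumes "x \<in> V m n" "n > 0" shows "\<exists>b<m. x b \<noteq> 0"
proof (rule ccontr)
  assume "\<not> ?thesis"
  then have "(\<Sum>i<m. x i) = 0" by simp
  then show False using V_sum[OF assms(1)] assms(2) by simp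
qed

lemma V1: assumes "x \<in> V m 1" shows "\<exists>b<m. x b = 1"
  using V_nonzero[OF assms] V_le[OF assms] by (metis le_neq_implies_less less_one zero_less_one)

lemma V1_adj: assumes "x \<in> V m 1" "y \<in> V m 1" "x \<noteq> y" shows "SR_adj m x y"
proof -
  obtain b where b: "b < m" "x b = 1" using V1[OF assms(1)] by blast
  obtain c where c: "c < m" "y c = 1" using V1[OF assms(2)] by blast
  show ?thesis
  proof (cases "b = c")
    case True
    have "x = y"
    proof
      fix i show "x i = y i" using V_conc[OF assms(1) b(2), of i] V_conc[OF assms(2) c(2), of i] b c True
        by (cases "i = b") auto
    qed
    then show ?thesis using assms by simp
  next
    case False then show ?thesis using adj_conc[OF assms(1,2) b(2) c(2)] by simp
  qed
qed



lemma V_Suc_bij: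
  "bij_betw (\<lambda>x. (x m, x(m:=0))) (V (Suc m) n) (SIGMA k:{..n}. V m (n-k))"
proof (rule bij_betw_byWitness[where f' = "\<lambda>(k,y). y(m:=k)"])
  show "\<forall>a\<in>V (Suc m) n. (\<lambda>(k, y). y(m := k)) (a m, a(m := 0)) = a" by simp
  show "\<forall>a'\<in>(SIGMA k:{..n}. V m (n - k)). (\<lambda>x. (x m, x(m := 0))) ((\<lambda>(k, y). y(m := k)) a') = a'"
  proof
    fix a' assume "a' \<in> (SIGMA k:{..n}. V m (n - k))"
    then obtain k y where "a' = (k,y)" "y \<in> V m (n-k)" by blast
    then show "(\<lambda>x. (x m, x(m := 0))) ((\<lambda>(k, y). y(m := k)) a') = a'"
      using V_zero[of y m "n-k" m] by auto
  qed
  show "(\<lambda>x. (x m, x(m := 0))) ` V (Suc m) n \<subseteq> (SIGMA k:{..n}. V m (n - k))"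
  proof
    fix z assume "z \<in> (\<lambda>x. (x m, x(m := 0))) ` V (Suc m) n"
    then obtain x where x: "x \<in> V (Suc m) n" "z = (x m, x(m:=0))" by blast
    have s: "(\<Sum>i<m. x i) + x m = n" using V_sum[OF x(1)] by simp
    have "(\<Sum>i<m. (x(m:=0)) i) = (\<Sum>i<m. x i)" by (rule sum.cong) auto
    moreover have "\<forall>i\<ge>m. (x(m:=0)) i = 0" using V_zero[OF x(1)] by auto
    ultimately have "x(m:=0) \<in> V m (n - x m)" using s unfolding SR_vertices_def by auto
    moreover have "x m \<le> n" using s by linarith
    ultimately show "z \<in> (SIGMA k:{..n}. V m (n - k))" using x by blast
  qed
  show "(\<lambda>(k, y). y(m := k)) ` (SIGMA k:{..n}. V m (n - k)) \<subseteq> V (Suc m) n"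
  proof
    fix z assume "z \<in> (\<lambda>(k, y). y(m := k)) ` (SIGMA k:{..n}. V m (n - k))"
    then obtain p where p: "p \<in> (SIGMA k:{..n}. V m (n - k))" "z = (\<lambda>(k, y). y(m := k)) p" by (rule imageE)
    obtain k y where kp: "p = (k, y)" by (cases p)
    have ky: "k \<le> n" "y \<in> V m (n-k)" "z = y(m:=k)" using p kp by auto
    have "(\<Sum>i<m. (y(m:=k)) i) = (\<Sum>i<m. y i)" by (rule sum.cong) auto
    then have "(\<Sum>i<Suc m. z i) = n" using ky V_sum[OF ky(2)] by simp
    moreover have "\<forall>i\<ge>Suc m. z i = 0" using ky V_zero[OF ky(2)] by auto
    ultimately show "z \<in> V (Suc m) n" unfolding SR_vertices_def by blast
  qed
qed
lemma V_finite: "finite (V m n)"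
proof (induction m arbitrary: n)
  case 0
  have "V 0 n \<subseteq> {\<lambda>_. 0}" by (auto simp: SR_vertices_def)
  then show ?case using finite_subset by blast
next
  case (Suc m)
  have "finite (SIGMA k:{..n}. V m (n - k))" using Suc by auto
  then show ?case using bij_betw_finite[OF V_Suc_bij] by blast
qed

lemma V_card_Suc: "card (V (Suc m) n) = card (SIGMA k:{..n}. V m (n - k))"
  using bij_betw_same_card[OF V_Suc_bij] .

lemma V_card: "card (V (Suc m) n) = (m + n) choose n"
proof (induction m arbitrary: n)
  case 0
  have "V 0 0 = {\<lambda>_. 0}" by (auto simp: SR_vertices_def)
  moreover have "j > 0 \<Longrightarrow> V 0 j = {}" for j by (auto simp: SR_vertices_def)
  ultimately have c: "card (V 0 j) = (if j = 0 then 1 else 0)" for j by (cases j) auto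
  have "card (V (Suc 0) n) = (\<Sum>k\<le>n. card (V 0 (n - k)))"
    using V_card_Suc V_finite by (simp add: card_SigmaI)
  also have "\<dots> = (\<Sum>k\<le>n. if k = n then 1 else 0)"
    by (rule sum.cong) (auto simp: c)
  also have "\<dots> = 1" by simp
  finally show ?case by simp
next
  case (Suc m)
  have "card (V (Suc (Suc m)) n) = (\<Sum>k\<le>n. card (V (Suc m) (n - k)))"
    using V_card_Suc V_finite by (simp add: card_SigmaI)
  also have "\<dots> = (\<Sum>k\<le>n. (m + (n - k)) choose (n - k))" using Suc by simp
  also have "\<dots> = (\<Sum>k\<le>n. (m + k) choose k)"
    using sum.atLeastAtMost_rev[of "\<lambda>k. (m + k) choose k" 0 n] by (simp add: atLeast0AtMost)
  also have "\<dots> = Suc m + n choose n" by (simp add: sum_choose_lower)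
  finally show ?case .
qed

lemma choose3: "6 * ((k + 2) choose 3) = k * (k + 1) * (k + 2)"
proof (induction k)
  case 0 then show ?case by simp
next
  case (Suc k)
  have "Suc k + 2 choose 3 = (k + 2 choose 2) + (k + 2 choose 3)"
    using choose_reduce_nat[of "Suc k + 2" 3] by simp
  moreover have "2 * (k + 2 choose 2) = (k+2)*(k+1)" by (simp add: choose_two)
  ultimately show ?case using Suc by (simp add: algebra_simps)
qed

lemma V3_card: "m \<ge> 1 \<Longrightarrow> 6 * card (V m 3) = m * (m+1) * (m+2)"
proof -
  assume "m \<ge> 1"
  then obtain k where k: "m = Suc k" by (cases m) auto
  have "card (V m 3) = (m + 2) choose 3" using V_card[of k 3] k by (simp add: numeral_3_eq_3)
  then show ?thesis using choose3[of m] by simp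
qed



definition supp :: "nat \<Rightarrow> (nat \<Rightarrow> nat) \<Rightarrow> nat set" where
  "supp m x = {i. i < m \<and> x i \<noteq> 0}"

lemma supp_fin: "finite (supp m x)" by (simp add: supp_def)

lemma sum_supp: assumes "x \<in> V m n" shows "sum x (supp m x) = n"
proof -
  have "sum x (supp m x) = sum x {..<m}"
    by (rule sum.mono_neutral_left) (auto simp: supp_def)
  then show ?thesis using V_sum[OF assms] by simp
qed

lemma upd_inj: fixes x y :: "nat \<Rightarrow> nat" assumes "k \<le> x a" "k \<le> y a" "x(a := x a - k) = y(a := y a - k)" shows "x = y"
proof
  fix i show "x i = y i"
  proof (cases "i = a")
    case True
    have "x a - k = y a - k" using fun_cong[OF assms(3), of a] by simp
    then show ?thesis unfolding True using assms(1,2) by arith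
  next
    case False then show ?thesis using fun_cong[OF assms(3), of i] by simp
  qed
qed

lemma indepD: "SR_independent m n S \<Longrightarrow> x \<in> S \<Longrightarrow> y \<in> S \<Longrightarrow> \<not> SR_adj m x y"
  by (auto simp: SR_independent_def)

lemma indepV: "SR_independent m n S \<Longrightarrow> x \<in> S \<Longrightarrow> x \<in> V m n"
  by (auto simp: SR_independent_def)

lemma indep_fin: "SR_independent m n S \<Longrightarrow> finite S"
  using V_finite finite_subset by (auto simp: SR_independent_def)

lemma U_A: assumes I: "SR_independent m 3 S"
  shows "card {x\<in>S. \<exists>a. 2 \<le> x a} \<le> m"
proof -
  let ?A = "{x\<in>S. \<exists>a. 2 \<le> x a}"
  define f where "f x = (SOME a. 2 \<le> x a)" for x :: "nat \<Rightarrow> nat"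
  have fa: "2 \<le> x (f x)" if "x \<in> ?A" for x
    using that unfolding f_def by (metis (mono_tags, lifting) mem_Collect_eq someI_ex)
  have fm: "f x < m" if "x \<in> ?A" for x
    using fa[OF that] V_zero[OF indepV[OF I], of x "f x"] that by (cases "f x < m") auto
  have "inj_on f ?A"
  proof (rule inj_onI)
    fix x y assume x: "x \<in> ?A" and y: "y \<in> ?A" and e: "f x = f y"
    let ?a = "f x"
    have xV: "x(?a := x ?a - 2) \<in> V m 1"
      using V_upd[of x m 3 "f x" 2] indepV[OF I] fm[OF x] fa[OF x] x by simp
    have yV: "y(?a := y ?a - 2) \<in> V m 1"
      using V_upd[of y m 3 "f x" 2] indepV[OF I] fm[OF x] fa[OF y] e y by simp
    show "x = y"
    proof (rule ccontr)
      assume ne: "x \<noteq> y"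
      have "x(?a := x ?a - 2) \<noteq> y(?a := y ?a - 2)"
        using upd_inj[of 2 x ?a y] fa[OF x] fa[OF y] e ne by auto
      then have "SR_adj m (x(?a := x ?a - 2)) (y(?a := y ?a - 2))" using V1_adj xV yV by blast
      then have "SR_adj m x y" using adj_upd fa[OF x] fa[OF y] e by metis
      then show False using indepD[OF I] x y by blast
    qed
  qed
  moreover have "f ` ?A \<subseteq> {..<m}" using fm by auto
  ultimately show ?thesis using card_inj_on_le[of f ?A "{..<m}"] by simp
qed

lemma U_B: assumes I: "SR_independent m 3 S"
  shows "card {x\<in>S. \<exists>a. 3 \<le> x a} \<le> 1"
proof -
  let ?B = "{x\<in>S. \<exists>a. 3 \<le> x a}"
  have "finite ?B" using indep_fin[OF I] by simp
  moreover have "\<forall>x\<in>?B. \<forall>y\<in>?B. x = y"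
  proof (intro ballI)
    fix x y assume x: "x \<in> ?B" and y: "y \<in> ?B"
    then obtain a b where a: "3 \<le> x a" and b: "3 \<le> y b" by blast
    have xV: "x \<in> V m 3" and yV: "y \<in> V m 3" using x y indepV[OF I] by auto
    have a3: "x a = 3" using a V_le[OF xV, of a] by simp
    have b3: "y b = 3" using b V_le[OF yV, of b] by simp
    show "x = y"
    proof (cases "a = b")
      case True
      show ?thesis
      proof
        fix i show "x i = y i" using V_conc[OF xV a3, of i] V_conc[OF yV b3, of i] a3 b3 True
          by (cases "i = a") auto
      qed
    next
      case False
      then have "SR_adj m x y" using adj_conc[OF xV yV a3 b3] by simp
      then show ?thesis using indepD[OF I] x y by blast
    qed
  qed
  ultimately show ?thesis using card_le_Suc0_iff_eq[of ?B] by simp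
qed

lemma U_supp: assumes xV: "x \<in> V m 3"
  shows "3 \<le> card (supp m x) + of_bool (\<exists>a. 2 \<le> x a) + of_bool (\<exists>a. 3 \<le> x a)"
proof -
  have s: "sum x (supp m x) = 3" using sum_supp[OF xV] .
  have ne: "supp m x \<noteq> {}" using s by auto
  then have c1: "card (supp m x) \<ge> 1" using supp_fin by (simp add: Suc_le_eq card_gt_0_iff)
  show ?thesis
  proof (cases "\<exists>a. 2 \<le> x a")
    case False
    then have "\<And>i. x i \<le> 1" by (metis not_less_eq_eq numeral_2_eq_2 One_nat_def)
    then have "sum x (supp m x) \<le> card (supp m x) * 1" using sum_bounded_above[of "supp m x" x 1] by simp
    then show ?thesis using s by simp
  next
    case True
    show ?thesis
    proof (cases "\<exists>a. 3 \<le> x a")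
      case False
      then have "\<And>i. x i \<le> 2" by (metis not_less_eq_eq numeral_2_eq_2 numeral_3_eq_3)
      then have "sum x (supp m x) \<le> card (supp m x) * 2" using sum_bounded_above[of "supp m x" x 2] by simp
      then show ?thesis using s True by simp
    next
      case True2: True
      then show ?thesis using True c1 by simp
    qed
  qed
qed


lemma V2_conc: assumes xV: "x \<in> V m 2" and c: "card (supp m x) < 2" shows "\<exists>b. x b = 2"
proof -
  have s: "sum x (supp m x) = 2" using sum_supp[OF xV] .
  have "supp m x \<noteq> {}" using s by auto
  then have "card (supp m x) = 1" using c supp_fin[of m x] card_gt_0_iff[of "supp m x"] by linarith
  then obtain b where "supp m x = {b}" by (rule card_1_singletonE)
  then show ?thesis using s by auto
qed

lemma U_local: assumes I: "SR_independent m 3 S" and am: "a < m"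
  shows "2 * card {x\<in>S. x a \<noteq> 0} \<le> m + 1"
proof -
  let ?Sa = "{x\<in>S. x a \<noteq> 0}"
  define P where "P x = supp m (x(a := x a - 1))" for x
  have finSa: "finite ?Sa" using indep_fin[OF I] by simp
  have xV2: "x(a := x a - 1) \<in> V m 2" if "x \<in> ?Sa" for x
    using V_upd[OF indepV[OF I] am, of x 1] that by simp
  have disj: "\<forall>x\<in>?Sa. \<forall>y\<in>?Sa. x \<noteq> y \<longrightarrow> P x \<inter> P y = {}"
  proof (intro ballI impI)
    fix x y assume x: "x \<in> ?Sa" and y: "y \<in> ?Sa" and ne: "x \<noteq> y"
    show "P x \<inter> P y = {}"
    proof (rule ccontr)
      assume "P x \<inter> P y \<noteq> {}"
      then obtain b where b: "b < m" "(x(a := x a - 1)) b \<noteq> 0" "(y(a := y a - 1)) b \<noteq> 0"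
        by (auto simp: P_def supp_def)
      define x' where "x' = x(a := x a - 1)"
      define y' where "y' = y(a := y a - 1)"
      have x'V: "x'(b := x' b - 1) \<in> V m 1" using V_upd[OF xV2[OF x] b(1), of 1] b unfolding x'_def by simp
      have y'V: "y'(b := y' b - 1) \<in> V m 1" using V_upd[OF xV2[OF y] b(1), of 1] b unfolding y'_def by simp
      have ne': "x' \<noteq> y'" using upd_inj[of 1 x a y] x y ne unfolding x'_def y'_def by auto
      have "x'(b := x' b - 1) \<noteq> y'(b := y' b - 1)"
        using upd_inj[of 1 x' b y'] b ne' unfolding x'_def y'_def by auto
      then have "SR_adj m (x'(b := x' b - 1)) (y'(b := y' b - 1))" using V1_adj x'V y'V by blast
      then have "SR_adj m x' y'" using adj_upd[of 1 x' b y' m] b unfolding x'_def y'_def by simp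
      then have "SR_adj m x y" using adj_upd[of 1 x a y m] x y unfolding x'_def y'_def by simp
      then show False using indepD[OF I] x y by blast
    qed
  qed
  have "card (\<Union>(P ` ?Sa)) = (\<Sum>x\<in>?Sa. card (P x))"
    by (rule card_UN_disjoint) (use finSa disj in \<open>auto simp: P_def supp_fin\<close>)
  moreover have "card (\<Union>(P ` ?Sa)) \<le> m"
  proof -
    have "\<Union>(P ` ?Sa) \<subseteq> {..<m}" by (auto simp: P_def supp_def)
    then show ?thesis using card_mono[of "{..<m}"] by fastforce
  qed
  ultimately have sumP: "(\<Sum>x\<in>?Sa. card (P x)) \<le> m" by simp
  let ?E = "{x\<in>?Sa. card (P x) < 2}"
  have cE: "card ?E \<le> 1"
  proof -
    have "\<forall>x\<in>?E. \<forall>y\<in>?E. x = y"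
    proof (intro ballI)
      fix x y assume x: "x \<in> ?E" and y: "y \<in> ?E"
      have xS: "x \<in> ?Sa" and yS: "y \<in> ?Sa" using x y by auto
      have cx: "card (supp m (x(a := x a - 1))) < 2" using x unfolding P_def by simp
      have cy: "card (supp m (y(a := y a - 1))) < 2" using y unfolding P_def by simp
      obtain b where b: "(x(a := x a - 1)) b = 2" using V2_conc[OF xV2[OF xS] cx] by blast
      obtain c where c: "(y(a := y a - 1)) c = 2" using V2_conc[OF xV2[OF yS] cy] by blast
      show "x = y"
      proof (rule ccontr)
        assume ne: "x \<noteq> y"
        have ne': "x(a := x a - 1) \<noteq> y(a := y a - 1)" using upd_inj[of 1 x a y] xS yS ne by auto
        have "SR_adj m (x(a := x a - 1)) (y(a := y a - 1))"
        proof (cases "b = c")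
          case True
          have "x(a := x a - 1) = y(a := y a - 1)"
          proof
            fix i show "(x(a := x a - 1)) i = (y(a := y a - 1)) i"
              using V_conc[OF xV2[OF xS] b, of i] V_conc[OF xV2[OF yS] c, of i] b c True by (cases "i = b") auto
          qed
          then show ?thesis using ne' by simp
        next
          case False show ?thesis by (rule adj_conc[OF xV2[OF xS] xV2[OF yS] b c False]) simp
        qed
        then have "SR_adj m x y" using adj_upd[of 1 x a y m] xS yS by simp
        then show False using indepD[OF I] xS yS by blast
      qed
    qed
    moreover have "finite ?E" using finSa by (rule finite_subset[rotated]) blast
    ultimately show ?thesis using card_le_Suc0_iff_eq[of ?E] by simp
  qed
  have pos: "card (P x) \<ge> 1" if "x \<in> ?Sa" for x
  proof -
    have "sum (x(a := x a - 1)) (P x) = 2" using sum_supp[OF xV2[OF that]] unfolding P_def .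
    then have "P x \<noteq> {}" by auto
    then show ?thesis using supp_fin unfolding P_def by (simp add: Suc_le_eq card_gt_0_iff)
  qed
  have "(\<Sum>x\<in>?Sa. 2::nat) \<le> (\<Sum>x\<in>?Sa. card (P x) + of_bool (x \<in> ?E))"
    by (rule sum_mono) (use pos in \<open>auto\<close>)
  also have "\<dots> = (\<Sum>x\<in>?Sa. card (P x)) + card ?E"
    using finSa by (simp add: sum.distrib sum.If_cases Int_def)
  finally show ?thesis using sumP cE by (simp add: mult.commute)
qed


lemma double_count: assumes "finite S" "S \<subseteq> V m n"
  shows "(\<Sum>a<m. card {x\<in>S. x a \<noteq> 0}) = (\<Sum>x\<in>S. card (supp m x))"
proof -
  have "(\<Sum>a<m. card {x\<in>S. x a \<noteq> 0}) = (\<Sum>a<m. \<Sum>x\<in>S. of_bool (x a \<noteq> 0))"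
    using assms(1) by (simp add: sum.If_cases Int_def)
  also have "\<dots> = (\<Sum>x\<in>S. \<Sum>a<m. of_bool (x a \<noteq> 0))" by (rule sum.swap)
  also have "\<dots> = (\<Sum>x\<in>S. card (supp m x))"
    by (rule sum.cong) (auto simp: sum.If_cases Int_def supp_def)
  finally show ?thesis .
qed

lemma upper: assumes I: "SR_independent m 3 S"
  shows "6 * card S \<le> m * m + 3 * m + 2" and "even m \<Longrightarrow> 6 * card S \<le> m * m + 2 * m + 2"
proof -
  have fin: "finite S" using indep_fin[OF I] .
  have SV: "S \<subseteq> V m 3" using I by (auto simp: SR_independent_def)
  let ?T = "\<Sum>x\<in>S. card (supp m x)"
  have "(\<Sum>x\<in>S. 3::nat) \<le> (\<Sum>x\<in>S. card (supp m x) + of_bool (\<exists>a. 2 \<le> x a) + of_bool (\<exists>a. 3 \<le> x a))"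
    by (rule sum_mono) (use U_supp SV in blast)
  also have "\<dots> = ?T + card {x\<in>S. \<exists>a. 2 \<le> x a} + card {x\<in>S. \<exists>a. 3 \<le> x a}"
    using fin by (simp add: sum.distrib sum.If_cases Int_def)
  finally have t: "3 * card S \<le> ?T + m + 1" using U_A[OF I] U_B[OF I] by simp
  have loc: "2 * card {x\<in>S. x a \<noteq> 0} \<le> m + 1" if "a \<in> {..<m}" for a using U_local[OF I] that by simp
  have "2 * ?T = 2 * (\<Sum>a<m. card {x\<in>S. x a \<noteq> 0})"
    using double_count[OF fin SV] by simp
  also have "\<dots> = (\<Sum>a<m. 2 * card {x\<in>S. x a \<noteq> 0})" by (rule sum_distrib_left)
  also have "\<dots> \<le> (\<Sum>a<m. m + 1)" by (rule sum_mono) (use loc in blast)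
  finally have T1: "2 * ?T \<le> m * (m + 1)" by simp
  show "6 * card S \<le> m * m + 3 * m + 2" using t T1 by simp
  assume ev: "even m"
  have loc2: "2 * card {x\<in>S. x a \<noteq> 0} \<le> m" if "a \<in> {..<m}" for a
    using loc[OF that] ev by presburger
  have "2 * ?T = 2 * (\<Sum>a<m. card {x\<in>S. x a \<noteq> 0})"
    using double_count[OF fin SV] by simp
  also have "\<dots> = (\<Sum>a<m. 2 * card {x\<in>S. x a \<noteq> 0})" by (rule sum_distrib_left)
  also have "\<dots> \<le> (\<Sum>a<m. m)" by (rule sum_mono) (use loc2 in blast)
  finally have T2: "2 * ?T \<le> m * m" by simp
  show "6 * card S \<le> m * m + 2 * m + 2" using t T2 by simp
qed



definition w :: "nat \<Rightarrow> (nat \<Rightarrow> nat) \<Rightarrow> nat" where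
  "w m x = (\<Sum>i<m. i * x i)"

lemma coprime_small:
  fixes M :: nat and k :: int
  assumes "k \<noteq> 0" "\<bar>k\<bar> \<le> 3" "odd M" "\<bar>k\<bar> = 3 \<Longrightarrow> \<not> 3 dvd M"
  shows "coprime (int M) k"
proof -
  let ?g = "gcd (int M) k"
  have gpos: "?g > 0" using assms(1) by simp
  have gk: "?g dvd k" by simp
  have gM: "?g dvd int M" by simp
  have "?g \<le> \<bar>k\<bar>" using gk assms(1) by (metis dvd_abs_iff zdvd_imp_le zero_less_abs_iff)
  then have "?g = 1 \<or> ?g = 2 \<or> ?g = 3" using gpos assms(2) by linarith
  moreover have "?g \<noteq> 2"
  proof
    assume "?g = 2"
    then have "(2::int) dvd int M" using gM by simp
    then show False using assms(3) by presburger
  qed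
  moreover have "?g \<noteq> 3"
  proof
    assume g3: "?g = 3"
    then have "(3::int) dvd int M" using gM by simp
    then have "3 dvd M" by presburger
    moreover have "(3::int) dvd k" using gk g3 by simp
    then have "\<bar>k\<bar> = 3" using assms(1,2) by (auto simp: dvd_def)
    ultimately show False using assms(4) by simp
  qed
  ultimately show ?thesis by (simp add: coprime_iff_gcd_eq_1)
qed

lemma class_indep:
  assumes xV: "x \<in> V m 3" and yV: "y \<in> V m 3" and e: "w m x mod M = w m y mod M"
    and Mm: "m \<le> M" and oM: "odd M"
    and c3: "3 dvd M \<Longrightarrow> (\<forall>i. x i \<noteq> 3) \<and> (\<forall>i. y i \<noteq> 3)"
  shows "\<not> SR_adj m x y"
proof
  assume "SR_adj m x y"
  then obtain b c where D: "{i. i < m \<and> x i \<noteq> y i} = {b, c}" and bc: "b \<noteq> c"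
    unfolding SR_adj_def card_2_iff by blast
  have bm: "b < m" and cm: "c < m" using D by blast+
  have xb: "x b \<noteq> y b" using D by blast
  have eq: "i < m \<Longrightarrow> i \<noteq> b \<Longrightarrow> i \<noteq> c \<Longrightarrow> x i = y i" for i using D by blast
  define f where "f i = int (x i) - int (y i)" for i
  have f0: "i < m \<Longrightarrow> i \<noteq> b \<Longrightarrow> i \<noteq> c \<Longrightarrow> f i = 0" for i using eq unfolding f_def by auto
  have s1: "(\<Sum>i<m. f i) = (\<Sum>i\<in>{b,c}. f i)"
    by (rule sum.mono_neutral_right) (auto simp: bm cm intro!: f0)
  have "(\<Sum>i<m. f i) = int (\<Sum>i<m. x i) - int (\<Sum>i<m. y i)"
    unfolding f_def by (simp add: sum_subtractf)
  then have "f b + f c = 0" using s1 bc V_sum[OF xV] V_sum[OF yV] by simp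
  then have fc: "f c = - f b" by simp
  have s2: "(\<Sum>i<m. int i * f i) = (\<Sum>i\<in>{b,c}. int i * f i)"
    by (rule sum.mono_neutral_right) (auto simp: bm cm intro!: f0)
  have "(\<Sum>i<m. int i * f i) = int (w m x) - int (w m y)"
    unfolding f_def w_def by (simp add: sum_subtractf algebra_simps)
  then have wd: "int (w m x) - int (w m y) = (int b - int c) * f b"
    using s2 bc fc by (simp add: algebra_simps)
  have "int (w m x) mod int M = int (w m y) mod int M" using e by (metis of_nat_mod)
  then have "int M dvd (int b - int c) * f b" using wd by (metis mod_eq_dvd_iff)
  moreover have "coprime (int M) (f b)"
  proof (rule coprime_small[OF _ _ oM])
    show "f b \<noteq> 0" using xb unfolding f_def by simp
    show "\<bar>f b\<bar> \<le> 3" using V_le[OF xV, of b] V_le[OF yV, of b] unfolding f_def by simp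
    show "\<not> 3 dvd M" if "\<bar>f b\<bar> = 3"
    proof
      assume "3 dvd M"
      then have "x b \<noteq> 3" "y b \<noteq> 3" using c3 by auto
      then show False using that V_le[OF xV, of b] V_le[OF yV, of b] unfolding f_def by simp
    qed
  qed
  ultimately have "int M dvd (int b - int c)" by (simp add: coprime_dvd_mult_left_iff coprime_commute)
  then have "int M dvd \<bar>int b - int c\<bar>" by simp
  moreover have "0 < \<bar>int b - int c\<bar>" using bc by simp
  ultimately have "int M \<le> \<bar>int b - int c\<bar>" by (rule zdvd_imp_le)
  then show False using bm cm Mm by linarith
qed

lemma sum_ofbool: "a < (M::nat) \<Longrightarrow> (\<Sum>c<M. of_bool (a = c) :: nat) = 1"
proof -
  assume a: "a < M"
  have "(\<Sum>c<M. of_bool (a = c) :: nat) = (\<Sum>c\<in>{a}. of_bool (a = c))"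
    by (rule sum.mono_neutral_right) (use a in auto)
  then show ?thesis by simp
qed

lemma pigeon:
  assumes fin: "finite T" and M: "M > 0" and fT: "\<And>x. x \<in> T \<Longrightarrow> f x < (M::nat)"
  shows "\<exists>c. card T \<le> M * card {x\<in>T. f x = c}"
proof (rule ccontr)
  assume "\<not> ?thesis"
  then have lt: "M * card {x\<in>T. f x = c} < card T" for c by (simp add: not_le)
  have "(\<Sum>c<M. card {x\<in>T. f x = c}) = (\<Sum>c<M. \<Sum>x\<in>T. of_bool (f x = c))"
    using fin by (simp add: sum.If_cases Int_def)
  also have "\<dots> = (\<Sum>x\<in>T. \<Sum>c<M. of_bool (f x = c))" by (rule sum.swap)
  also have "\<dots> = (\<Sum>x\<in>T. 1)"
  proof (rule sum.cong)
    fix x assume "x \<in> T"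
    then have "f x \<in> {..<M}" using fT by simp
    then show "(\<Sum>c<M. of_bool (f x = c) :: nat) = 1" using sum_ofbool[of "f x" M] by simp
  qed simp
  finally have "(\<Sum>c<M. card {x\<in>T. f x = c}) = card T" by simp
  then have "M * card T = (\<Sum>c<M. M * card {x\<in>T. f x = c})" by (metis sum_distrib_left)
  also have "\<dots> < (\<Sum>c<M. card T)" by (rule sum_strict_mono) (use M lt in auto)
  finally show False by simp
qed

lemma lower:
  assumes T: "T \<subseteq> V m 3" and Mm: "m \<le> M" and oM: "odd M"
    and c3: "3 dvd M \<Longrightarrow> \<forall>x\<in>T. \<forall>i. x i \<noteq> 3"
  shows "\<exists>S. SR_independent m 3 S \<and> card T \<le> M * card S"
proof -
  have M0: "M > 0" using oM by (cases M) auto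
  have fin: "finite T" using T V_finite finite_subset by blast
  obtain c where c: "card T \<le> M * card {x\<in>T. w m x mod M = c}"
    using pigeon[OF fin M0, of "\<lambda>x. w m x mod M"] M0 by auto
  have "SR_independent m 3 {x\<in>T. w m x mod M = c}"
    unfolding SR_independent_def
  proof (intro conjI ballI)
    show "{x \<in> T. w m x mod M = c} \<subseteq> V m 3" using T by auto
    fix x y assume x: "x \<in> {x \<in> T. w m x mod M = c}" and y: "y \<in> {x \<in> T. w m x mod M = c}"
    show "\<not> SR_adj m x y"
      by (rule class_indep[OF _ _ _ Mm oM]) (use x y T c3 in auto)
  qed
  then show ?thesis using c by blast
qed

lemma T2_card: assumes "m \<ge> 1"
  shows "card (V m 3) \<le> card {x\<in>V m 3. \<forall>i. x i \<noteq> 3} + m"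
proof -
  let ?T = "{x\<in>V m 3. \<forall>i. x i \<noteq> 3}"
  let ?e = "\<lambda>a::nat. \<lambda>i::nat. if i = a then 3 else (0::nat)"
  have "V m 3 \<subseteq> ?T \<union> ?e ` {..<m}"
  proof
    fix x assume xV: "x \<in> V m 3"
    show "x \<in> ?T \<union> ?e ` {..<m}"
    proof (cases "\<forall>i. x i \<noteq> 3")
      case True then show ?thesis using xV by simp
    next
      case False
      then obtain a where a: "x a = 3" by blast
      have am: "a < m" using V_zero[OF xV, of a] a by (cases "a < m") auto
      have "x = ?e a"
      proof
        fix i show "x i = ?e a i" using V_conc[OF xV a, of i] a by auto
      qed
      then show ?thesis using am by blast
    qed
  qed
  then have "card (V m 3) \<le> card (?T \<union> ?e ` {..<m})"
    by (rule card_mono[rotated]) (use V_finite in auto)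
  also have "\<dots> \<le> card ?T + card (?e ` {..<m})" by (rule card_Un_le)
  also have "\<dots> \<le> card ?T + m" using card_image_le[of "{..<m}" ?e] by simp
  finally show ?thesis .
qed



lemma alpha_props: assumes "m \<ge> 1"
  shows "\<exists>S0. SR_independent m 3 S0 \<and> SR_alpha m 3 = card S0"
    and "SR_independent m 3 S \<Longrightarrow> card S \<le> SR_alpha m 3"
proof -
  let ?K = "card ` {S. SR_independent m 3 S}"
  have "?K \<subseteq> {..m*m+3*m+2}"
  proof
    fix k assume "k \<in> ?K"
    then obtain S where "SR_independent m 3 S" "k = card S" by blast
    then show "k \<in> {..m*m+3*m+2}" using upper(1)[of m S] by simp
  qed
  then have fK: "finite ?K" using finite_subset by blast
  have "SR_independent m 3 {}" by (simp add: SR_independent_def)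
  then have neK: "?K \<noteq> {}" by blast
  have "SR_alpha m 3 \<in> ?K" unfolding SR_alpha_def using Max_in[OF fK neK] .
  then show "\<exists>S0. SR_independent m 3 S0 \<and> SR_alpha m 3 = card S0" by blast
  show "SR_independent m 3 S \<Longrightarrow> card S \<le> SR_alpha m 3"
    unfolding SR_alpha_def using Max_ge[OF fK] by blast
qed

lemma arB: "(X::nat) + 2 \<le> 6*A + 6 \<Longrightarrow> 6*A \<le> X + 2 \<Longrightarrow> X = 6*R \<Longrightarrow> 6*A = X" by presburger
lemma arC: "(X::nat) \<le> 6*A \<Longrightarrow> 6*A \<le> X + 2 \<Longrightarrow> X = 6*R \<Longrightarrow> 6*A = X" by presburger
lemma arD: "(X::nat) < 6*A + 6 \<Longrightarrow> 6*A \<le> X + 2 \<Longrightarrow> X = 6*R + 8 \<Longrightarrow> 6*A = X - 2" by presburger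

theorem proposition13:
  fixes m :: nat
  assumes "m \<ge> 1"
  shows "(m mod 6 = 1 \<or> m mod 6 = 5 \<longrightarrow> 6 * SR_alpha m 3 = (m + 1) * (m + 2))
       \<and> (m mod 6 = 3 \<longrightarrow> 6 * SR_alpha m 3 = m * (m + 3))
       \<and> (m mod 6 = 0 \<or> m mod 6 = 4 \<longrightarrow> 6 * SR_alpha m 3 = m * (m + 2))
       \<and> (m mod 6 = 2 \<longrightarrow> 6 * SR_alpha m 3 = m\<^sup>2 + 2 * m - 2)"
proof -
  let ?a = "SR_alpha m 3"
  obtain S0 where S0: "SR_independent m 3 S0" "?a = card S0" using alpha_props(1)[OF assms] by blast
  have up1: "6 * ?a \<le> m*m + 3*m + 2" using upper(1)[OF S0(1)] S0(2) by simp
  have up2: "even m \<Longrightarrow> 6 * ?a \<le> m*m + 2*m + 2" using upper(2)[OF S0(1)] S0(2) by simp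
  have cV: "6 * card (V m 3) = m * (m+1) * (m+2)" using V3_card[OF assms] .
  have cT2: "card (V m 3) \<le> card {x\<in>V m 3. \<forall>i. x i \<noteq> 3} + m" using T2_card[OF assms] .
  have ge: "SR_independent m 3 S \<Longrightarrow> card S \<le> ?a" for S using alpha_props(2)[OF assms] .
  have m6: "m = 6 * (m div 6) + m mod 6" by simp
  define q where "q = m div 6"
  show ?thesis
  proof (intro conjI impI)
    assume h: "m mod 6 = 1 \<or> m mod 6 = 5"
    have "odd m" "\<not> 3 dvd m" using h by presburger+
    then obtain S where S: "SR_independent m 3 S" "card (V m 3) \<le> m * card S"
      using lower[of "V m 3" m m] by auto
    have "m * ((m+1)*(m+2)) \<le> m * (6 * card S)" using S(2) cV
      by (metis (no_types, lifting) mult.assoc mult.left_commute mult_le_mono2)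
    then have "(m+1)*(m+2) \<le> 6 * card S" using mult_le_cancel1[of m "(m+1)*(m+2)" "6 * card S"] assms by linarith
    then have "(m+1)*(m+2) \<le> 6 * ?a" using ge[OF S(1)] by linarith
    moreover have "(m+1)*(m+2) = m*m+3*m+2" by (simp add: algebra_simps)
    ultimately show "6 * ?a = (m + 1) * (m + 2)" using up1 by linarith
  next
    assume h: "m mod 6 = 3"
    have "odd m" using h by presburger
    then obtain S where S: "SR_independent m 3 S" "card {x\<in>V m 3. \<forall>i. x i \<noteq> 3} \<le> m * card S"
      using lower[of "{x\<in>V m 3. \<forall>i. x i \<noteq> 3}" m m] by auto
    have "m * ((m+1)*(m+2)) \<le> m * (6 * card S + 6)" using S(2) cV cT2
      by (simp add: algebra_simps)
    then have "(m+1)*(m+2) \<le> 6 * card S + 6" using mult_le_cancel1[of m "(m+1)*(m+2)" "6 * card S + 6"] assms by linarith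
    then have lo: "(m+1)*(m+2) \<le> 6 * ?a + 6" using ge[OF S(1)] by linarith
    have mq: "m = 6*q+3" using h m6 q_def by simp
    have e1: "m*m + 3*m = 6*(6*q*q + 9*q + 3)" unfolding mq by (simp add: algebra_simps)
    have e2: "(m+1)*(m+2) = m*m+3*m+2" by (simp add: algebra_simps)
    have e3: "m*(m+3) = m*m+3*m" by (simp add: algebra_simps)
    have "6 * ?a = m*m+3*m" by (rule arB[where R = "6*q*q+9*q+3"]) (use lo up1 e1 e2 in linarith)+
    then show "6 * ?a = m * (m + 3)" using e3 by simp
  next
    assume h: "m mod 6 = 0 \<or> m mod 6 = 4"
    have "odd (m+1)" "\<not> 3 dvd (m+1)" "even m" using h by presburger+
    then obtain S where S: "SR_independent m 3 S" "card (V m 3) \<le> (m+1) * card S"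
      using lower[of "V m 3" m "m+1"] by auto
    have "(m+1) * (m*(m+2)) \<le> (m+1) * (6 * card S)" using S(2) cV
      by (metis (no_types, lifting) mult.assoc mult.commute mult.left_commute mult_le_mono2)
    then have "m*(m+2) \<le> 6 * card S" using mult_le_cancel1[of "m+1" "m*(m+2)" "6 * card S"] by linarith
    then have lo: "m*(m+2) \<le> 6 * ?a" using ge[OF S(1)] by linarith
    have e2: "m*(m+2) = m*m+2*m" by (simp add: algebra_simps)
    have "\<exists>R. m*m + 2*m = 6*R"
    proof (cases "m mod 6 = 0")
      case True
      then have mq: "m = 6*q" using m6 q_def by simp
      show ?thesis by (rule exI[of _ "6*q*q+2*q"]) (simp add: mq algebra_simps)
    next
      case False
      then have mq: "m = 6*q+4" using h m6 q_def by simp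
      show ?thesis by (rule exI[of _ "6*q*q+10*q+4"]) (simp add: mq algebra_simps)
    qed
    then obtain R where R: "m*m + 2*m = 6*R" by blast
    have "6 * ?a = m*m+2*m" by (rule arC[where R = R]) (use lo up2[OF \<open>even m\<close>] e2 R in linarith)+
    then show "6 * ?a = m * (m + 2)" using e2 by simp
  next
    assume h: "m mod 6 = 2"
    have "odd (m+1)" "even m" using h by presburger+
    then obtain S where S: "SR_independent m 3 S" "card {x\<in>V m 3. \<forall>i. x i \<noteq> 3} \<le> (m+1) * card S"
      using lower[of "{x\<in>V m 3. \<forall>i. x i \<noteq> 3}" m "m+1"] by auto
    have "(m+1) * (m*(m+2)) \<le> (m+1) * (6 * card S) + 6 * m" using S(2) cV cT2
      by (simp add: algebra_simps)
    also have "\<dots> < (m+1) * (6 * card S + 6)" by (simp add: algebra_simps)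
    finally have "m*(m+2) < 6 * card S + 6" using mult_less_cancel1[of "m+1" "m*(m+2)" "6 * card S + 6"] by linarith
    then have lo: "m*(m+2) < 6 * ?a + 6" using ge[OF S(1)] by linarith
    have mq: "m = 6*q+2" using h m6 q_def by simp
    have e1: "m*m + 2*m = 6*(6*q*q + 6*q) + 8" unfolding mq by (simp add: algebra_simps)
    have e2: "m*(m+2) = m*m+2*m" by (simp add: algebra_simps)
    have e3: "m\<^sup>2 = m*m" by (simp add: power2_eq_square)
    have "6 * ?a = m*m+2*m - 2" by (rule arD[where R = "6*q*q + 6*q"]) (use lo up2[OF \<open>even m\<close>] e1 e2 in linarith)+
    then show "6 * ?a = m\<^sup>2 + 2 * m - 2" using e3 by simp
  qed
qed

end
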